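(* Consider SEG: $X_{t+1/2}=X_t-\gamma F_t$, $X_{t+1}=X_t-\alpha\gamma F_{t+1/2}$, where $F_t=F(X_t)+U_t(X_t)$ and $F_{t+1/2}=F(X_{t+1/2})+U_{t+1/2}(X_{t+1/2})$. Let $F:\mathbb{R}^d\to\mathbb{R}^d$ be $L$-Lipschitz, let $x^*\in X^*=\{x:F(x)=0\}$ be such that $\langle F(x),x-x^*\rangle\ge\mu\|x-x^*\|^2-\lambda$ for all $x$ (with $\lambda\ge0,\mu>0$), and assume the stochastic oracle assumptions of the context. Let $Z_t=F_{t+1/2}$. If $0<\gamma\le\frac1{\sqrt3L}$, then $$\gamma^2\,\mathbb{E}[\|Z_t\|^2\mid\mathcal{F}_t]\le2\gamma\,\mathbb{E}[\langle Z_t,X_t-x^*\rangle\mid\mathcal{F}_t]+2(\lambda\gamma+3\sigma^2\gamma^2).$$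
   Context: Stochastic oracle: noise fields are i.i.d. random fields; filtration $(\mathcal{F}_t)$ (history of the iterates) with $\mathcal{F}_{t+1/2}=\mathcal{F}_t$; $U_t(X_t)$ is $\mathcal{F}_{t+1}$- but not $\mathcal{F}_t$-measurable; $\mathbb{E}[U_t(x)\mid\mathcal{F}_t]=0$ and $\mathbb{E}[\|U_t(x)\|^2\mid\mathcal{F}_t]\le\sigma^2$ for all $x$ (and likewise for $U_{t+1/2}$). *)

theory Defs
  imports "HOL-Probability.Probability"
begin

text \<open>Stochastic oracle assumption for a random field U (a map from outcomes to
vector fields) relative to a sub-sigma-algebra Fs of M: for every Fs-measurable
(random) query point W, the noise U(W) is square integrable, has zero conditional
mean given Fs (expressed componentwise, since conditional expectation in the
library is real-valued), and conditional second moment at most sigma^2.\<close>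

definition stoch_oracle ::
  "'w measure \<Rightarrow> 'w measure \<Rightarrow> ('w \<Rightarrow> 'a::euclidean_space \<Rightarrow> 'a) \<Rightarrow> real \<Rightarrow> bool" where
  "stoch_oracle M Fs U \<sigma> \<longleftrightarrow>
     (\<forall>W \<in> borel_measurable Fs.
        (\<lambda>\<omega>. U \<omega> (W \<omega>)) \<in> borel_measurable M \<and>
        integrable M (\<lambda>\<omega>. (norm (U \<omega> (W \<omega>)))\<^sup>2) \<and>
        (\<forall>b\<in>Basis. AE \<omega> in M. real_cond_exp M Fs (\<lambda>\<omega>. U \<omega> (W \<omega>) \<bullet> b) \<omega> = 0) \<and>
        (AE \<omega> in M. real_cond_exp M Fs (\<lambda>\<omega>. (norm (U \<omega> (W \<omega>)))\<^sup>2) \<omega> \<le> \<sigma>\<^sup>2))"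

end

theory Submission
  imports Defs
begin

lemma sq3: fixes a b c :: real shows "(a + b + c)\<^sup>2 \<le> 3 * (a\<^sup>2 + b\<^sup>2 + c\<^sup>2)"
proof -
  have "0 \<le> (a - b)\<^sup>2 + (b - c)\<^sup>2 + (a - c)\<^sup>2" by simp
  thus ?thesis by (simp add: power2_eq_square algebra_simps)
qed

lemma norm3_sq: fixes p q r :: "'a::real_normed_vector"
  shows "(norm (p + q + r))\<^sup>2 \<le> 3 * ((norm p)\<^sup>2 + (norm q)\<^sup>2 + (norm r)\<^sup>2)"
proof -
  have "norm (p + q + r) \<le> norm p + norm q + norm r"
    by (metis add_right_mono norm_triangle_ineq order_trans)
  hence "(norm (p + q + r))\<^sup>2 \<le> (norm p + norm q + norm r)\<^sup>2"
    by (simp add: power_mono)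
  also have "\<dots> \<le> 3 * ((norm p)\<^sup>2 + (norm q)\<^sup>2 + (norm r)\<^sup>2)"
    by (rule sq3)
  finally show ?thesis .
qed

lemma pointwise_ineq:
  fixes x xh xs g z u v fx fxh :: "'a::real_inner" and \<gamma> L lam :: real
  assumes g: "g = fx + u" and xh: "xh = x - \<gamma> *\<^sub>R g" and z: "z = fxh + v"
    and lip: "norm (fxh - fx) \<le> L * norm (xh - x)" and L: "L \<ge> 0"
    and gl: "3 * L\<^sup>2 * \<gamma>\<^sup>2 \<le> 1"
    and mon: "fxh \<bullet> (xh - xs) \<ge> - lam" and gpos: "\<gamma> > 0"
  shows "\<gamma>\<^sup>2 * (norm z)\<^sup>2 \<le> 2 * \<gamma> * (z \<bullet> (x - xs)) + 2 * \<gamma> * lam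
     - 2 * \<gamma> * (v \<bullet> (xh - xs)) + 3 * \<gamma>\<^sup>2 * (norm v)\<^sup>2 + 3 * \<gamma>\<^sup>2 * (norm u)\<^sup>2"
proof -
  have e1: "z \<bullet> (x - xs) = z \<bullet> (xh - xs) + \<gamma> * (z \<bullet> g)"
    unfolding xh by (simp add: inner_diff_right)
  have e2: "2 * (z \<bullet> g) = (norm z)\<^sup>2 + (norm g)\<^sup>2 - (norm (z - g))\<^sup>2"
    by (simp add: power2_norm_eq_inner inner_diff_left inner_diff_right inner_commute)
  have zg: "z - g = (fxh - fx) + v + (- u)" using g z by (simp add: algebra_simps)
  have n1: "(norm (fxh - fx))\<^sup>2 \<le> L\<^sup>2 * \<gamma>\<^sup>2 * (norm g)\<^sup>2"
  proof -
    have "norm (xh - x) = \<gamma> * norm g" using xh gpos by simp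
    hence "norm (fxh - fx) \<le> L * \<gamma> * norm g" using lip by simp
    hence "(norm (fxh - fx))\<^sup>2 \<le> (L * \<gamma> * norm g)\<^sup>2" by (simp add: power_mono)
    thus ?thesis by (simp add: power_mult_distrib)
  qed
  have "(norm (z - g))\<^sup>2 \<le> 3 * ((norm (fxh - fx))\<^sup>2 + (norm v)\<^sup>2 + (norm (-u))\<^sup>2)"
    unfolding zg by (rule norm3_sq)
  also have "\<dots> \<le> 3 * (L\<^sup>2 * \<gamma>\<^sup>2 * (norm g)\<^sup>2 + (norm v)\<^sup>2 + (norm u)\<^sup>2)" using n1 by simp
  finally have n2: "(norm (z - g))\<^sup>2 \<le> (norm g)\<^sup>2 + 3 * (norm v)\<^sup>2 + 3 * (norm u)\<^sup>2"
    using gl mult_right_mono[OF gl, of "(norm g)\<^sup>2"] by (simp add: algebra_simps)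
  have e3: "z \<bullet> (xh - xs) = fxh \<bullet> (xh - xs) + v \<bullet> (xh - xs)" using z by (simp add: inner_add_left)
  have g2: "\<gamma>\<^sup>2 * (norm (z - g))\<^sup>2 \<le> \<gamma>\<^sup>2 * ((norm g)\<^sup>2 + 3 * (norm v)\<^sup>2 + 3 * (norm u)\<^sup>2)"
    using n2 by (simp add: mult_left_mono)
  have key: "2 * \<gamma> * (z \<bullet> (x - xs)) = 2 * \<gamma> * (fxh \<bullet> (xh - xs)) + 2 * \<gamma> * (v \<bullet> (xh - xs))
      + \<gamma>\<^sup>2 * (norm z)\<^sup>2 + \<gamma>\<^sup>2 * (norm g)\<^sup>2 - \<gamma>\<^sup>2 * (norm (z - g))\<^sup>2"
  proof -
    have "2 * \<gamma> * (z \<bullet> (x - xs)) = 2 * \<gamma> * (z \<bullet> (xh - xs)) + \<gamma>\<^sup>2 * (2 * (z \<bullet> g))"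
      using e1 by (simp add: algebra_simps power2_eq_square)
    also have "\<dots> = 2 * \<gamma> * (fxh \<bullet> (xh - xs) + v \<bullet> (xh - xs))
        + \<gamma>\<^sup>2 * ((norm z)\<^sup>2 + (norm g)\<^sup>2 - (norm (z - g))\<^sup>2)"
      by (simp only: e2 e3)
    finally show ?thesis by (simp add: algebra_simps)
  qed
  have g2': "\<gamma>\<^sup>2 * (norm (z - g))\<^sup>2 \<le> \<gamma>\<^sup>2 * (norm g)\<^sup>2 + 3 * \<gamma>\<^sup>2 * (norm v)\<^sup>2 + 3 * \<gamma>\<^sup>2 * (norm u)\<^sup>2"
    using g2 by (simp add: algebra_simps)
  have m2: "2 * \<gamma> * (fxh \<bullet> (xh - xs)) \<ge> - 2 * \<gamma> * lam"
    using mult_left_mono[OF mon, of "2 * \<gamma>"] gpos by simp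
  show ?thesis using key g2' m2 by linarith
qed
lemma sq2: fixes a b :: real shows "(a + b)\<^sup>2 \<le> 2 * a\<^sup>2 + 2 * b\<^sup>2"
proof -
  have "0 \<le> (a - b)\<^sup>2" by simp
  thus ?thesis by (simp add: power2_eq_square algebra_simps)
qed

lemma norm_add_sq: fixes a b :: "'a::real_normed_vector"
  shows "(norm (a + b))\<^sup>2 \<le> 2 * (norm a)\<^sup>2 + 2 * (norm b)\<^sup>2"
proof -
  have "(norm (a + b))\<^sup>2 \<le> (norm a + norm b)\<^sup>2"
    by (simp add: power_mono norm_triangle_ineq)
  also have "\<dots> \<le> 2 * (norm a)\<^sup>2 + 2 * (norm b)\<^sup>2" by (rule sq2)
  finally show ?thesis .
qed

lemma norm_diff_sq: fixes a b :: "'a::real_normed_vector"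
  shows "(norm (a - b))\<^sup>2 \<le> 2 * (norm a)\<^sup>2 + 2 * (norm b)\<^sup>2"
  using norm_add_sq[of a "-b"] by simp

lemma L2_add:
  fixes f g :: "'w \<Rightarrow> 'a::euclidean_space"
  assumes [measurable]: "f \<in> borel_measurable M" "g \<in> borel_measurable M"
    and "integrable M (\<lambda>\<omega>. (norm (f \<omega>))\<^sup>2)" "integrable M (\<lambda>\<omega>. (norm (g \<omega>))\<^sup>2)"
  shows "integrable M (\<lambda>\<omega>. (norm (f \<omega> + g \<omega>))\<^sup>2)"
proof -
  have i: "integrable M (\<lambda>\<omega>. 2 * (norm (f \<omega>))\<^sup>2 + 2 * (norm (g \<omega>))\<^sup>2)"
    using assms(3,4) by (intro Bochner_Integration.integrable_add integrable_mult_right)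
  have ae: "AE \<omega> in M. norm ((norm (f \<omega> + g \<omega>))\<^sup>2) \<le> norm (2 * (norm (f \<omega>))\<^sup>2 + 2 * (norm (g \<omega>))\<^sup>2)"
    using norm_add_sq by (intro AE_I2) auto
  show ?thesis by (rule Bochner_Integration.integrable_bound[OF i _ ae]) measurable
qed

lemma L2_diff:
  fixes f g :: "'w \<Rightarrow> 'a::euclidean_space"
  assumes [measurable]: "f \<in> borel_measurable M" "g \<in> borel_measurable M"
    and "integrable M (\<lambda>\<omega>. (norm (f \<omega>))\<^sup>2)" "integrable M (\<lambda>\<omega>. (norm (g \<omega>))\<^sup>2)"
  shows "integrable M (\<lambda>\<omega>. (norm (f \<omega> - g \<omega>))\<^sup>2)"
proof -
  have i: "integrable M (\<lambda>\<omega>. 2 * (norm (f \<omega>))\<^sup>2 + 2 * (norm (g \<omega>))\<^sup>2)"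
    using assms(3,4) by (intro Bochner_Integration.integrable_add integrable_mult_right)
  have ae: "AE \<omega> in M. norm ((norm (f \<omega> - g \<omega>))\<^sup>2) \<le> norm (2 * (norm (f \<omega>))\<^sup>2 + 2 * (norm (g \<omega>))\<^sup>2)"
    using norm_diff_sq by (intro AE_I2) auto
  show ?thesis by (rule Bochner_Integration.integrable_bound[OF i _ ae]) measurable
qed

lemma L2_scale:
  fixes f :: "'w \<Rightarrow> 'a::euclidean_space"
  assumes "integrable M (\<lambda>\<omega>. (norm (f \<omega>))\<^sup>2)"
  shows "integrable M (\<lambda>\<omega>. (norm (c *\<^sub>R f \<omega>))\<^sup>2)"
  using integrable_mult_right[OF assms, of "c\<^sup>2"] by (simp add: power_mult_distrib)

lemma L2_inner:
  fixes f g :: "'w \<Rightarrow> 'a::euclidean_space"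
  assumes [measurable]: "f \<in> borel_measurable M" "g \<in> borel_measurable M"
    and "integrable M (\<lambda>\<omega>. (norm (f \<omega>))\<^sup>2)" "integrable M (\<lambda>\<omega>. (norm (g \<omega>))\<^sup>2)"
  shows "integrable M (\<lambda>\<omega>. f \<omega> \<bullet> g \<omega>)"
proof -
  have i: "integrable M (\<lambda>\<omega>. (norm (f \<omega>))\<^sup>2 + (norm (g \<omega>))\<^sup>2)"
    using assms(3,4) by (intro Bochner_Integration.integrable_add)
  have pt: "norm (a \<bullet> b) \<le> norm ((norm a)\<^sup>2 + (norm b)\<^sup>2)" for a b :: 'a
  proof -
    have "\<bar>a \<bullet> b\<bar> \<le> norm a * norm b" by (rule Cauchy_Schwarz_ineq2)
    also have "\<dots> \<le> (norm a)\<^sup>2 + (norm b)\<^sup>2"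
    proof -
      have "2 * (norm a * norm b) \<le> (norm a)\<^sup>2 + (norm b)\<^sup>2"
        using sum_squares_bound[of "norm a" "norm b"] by (simp add: mult.assoc)
      moreover have "0 \<le> norm a * norm b" by simp
      ultimately show ?thesis by linarith
    qed
    finally show ?thesis by simp
  qed
  have ae: "AE \<omega> in M. norm (f \<omega> \<bullet> g \<omega>) \<le> norm ((norm (f \<omega>))\<^sup>2 + (norm (g \<omega>))\<^sup>2)"
    using pt by (intro AE_I2) auto
  show ?thesis by (rule Bochner_Integration.integrable_bound[OF i _ ae]) measurable
qed

lemma L2_comp_inner:
  fixes f g :: "'w \<Rightarrow> 'a::euclidean_space"
  assumes [measurable]: "f \<in> borel_measurable M" "g \<in> borel_measurable M"
    and "integrable M (\<lambda>\<omega>. (norm (f \<omega>))\<^sup>2)" "integrable M (\<lambda>\<omega>. (norm (g \<omega>))\<^sup>2)"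
  shows "integrable M (\<lambda>\<omega>. (f \<omega> \<bullet> c) * (g \<omega> \<bullet> c))"
proof -
  have i: "integrable M (\<lambda>\<omega>. (norm c)\<^sup>2 * (norm c)\<^sup>2 * (norm (f \<omega>))\<^sup>2)"
    using assms(3) by (intro integrable_mult_right)
  have pt: "norm ((norm ((a \<bullet> c) *\<^sub>R c))\<^sup>2) \<le> norm ((norm c)\<^sup>2 * (norm c)\<^sup>2 * (norm a)\<^sup>2)" for a :: 'a
  proof -
    have "(norm ((a \<bullet> c) *\<^sub>R c))\<^sup>2 = (a \<bullet> c)\<^sup>2 * (norm c)\<^sup>2" by (simp add: power_mult_distrib)
    also have "(a \<bullet> c)\<^sup>2 \<le> (norm a * norm c)\<^sup>2"
      using Cauchy_Schwarz_ineq2[of a c] by (metis abs_ge_zero power2_abs power_mono)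
    hence "(a \<bullet> c)\<^sup>2 * (norm c)\<^sup>2 \<le> (norm a * norm c)\<^sup>2 * (norm c)\<^sup>2" by (simp add: mult_right_mono)
    finally show ?thesis by (simp add: power_mult_distrib algebra_simps)
  qed
  have ae: "AE \<omega> in M. norm ((norm ((f \<omega> \<bullet> c) *\<^sub>R c))\<^sup>2) \<le> norm ((norm c)\<^sup>2 * (norm c)\<^sup>2 * (norm (f \<omega>))\<^sup>2)"
    using pt by (intro AE_I2) auto
  have i2: "integrable M (\<lambda>\<omega>. (norm ((f \<omega> \<bullet> c) *\<^sub>R c))\<^sup>2)"
    by (rule Bochner_Integration.integrable_bound[OF i _ ae]) measurable
  have m: "(\<lambda>\<omega>. (f \<omega> \<bullet> c) *\<^sub>R c) \<in> borel_measurable M" by measurable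
  have "integrable M (\<lambda>\<omega>. ((f \<omega> \<bullet> c) *\<^sub>R c) \<bullet> g \<omega>)"
    by (rule L2_inner[OF m assms(2) i2 assms(4)])
  then show ?thesis by (simp add: mult.commute inner_commute)
qed

lemma L2_lip:
  fixes f :: "'w \<Rightarrow> 'a::euclidean_space" and F :: "'a \<Rightarrow> 'a"
  assumes [measurable]: "f \<in> borel_measurable M"
    and "integrable M (\<lambda>\<omega>. (norm (f \<omega>))\<^sup>2)" and fm: "finite_measure M"
    and lip: "L-lipschitz_on UNIV F"
  shows "integrable M (\<lambda>\<omega>. (norm (F (f \<omega>)))\<^sup>2)"
proof -
  have Fm[measurable]: "F \<in> borel_measurable borel"
    by (rule borel_measurable_continuous_onI[OF lipschitz_on_continuous_on[OF lip]])
  have i: "integrable M (\<lambda>\<omega>. 2 * (norm (F 0))\<^sup>2 + 2 * (L\<^sup>2 * (norm (f \<omega>))\<^sup>2))"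
    using assms(2) finite_measure.integrable_const[OF fm]
    by (intro Bochner_Integration.integrable_add integrable_mult_right) auto
  have pt: "norm ((norm (F a))\<^sup>2) \<le> norm (2 * (norm (F 0))\<^sup>2 + 2 * (L\<^sup>2 * (norm a)\<^sup>2))" for a :: 'a
  proof -
    have "dist (F a) (F 0) \<le> L * dist a 0" by (rule lipschitz_onD[OF lip]) auto
    hence "norm (F a - F 0) \<le> L * norm a" by (simp add: dist_norm)
    moreover have "norm (F a) \<le> norm (F 0) + norm (F a - F 0)"
      by (rule norm_triangle_sub)
    ultimately have "norm (F a) \<le> norm (F 0) + L * norm a" by linarith
    hence "(norm (F a))\<^sup>2 \<le> (norm (F 0) + L * norm a)\<^sup>2" by (simp add: power_mono)
    also have "\<dots> \<le> 2 * (norm (F 0))\<^sup>2 + 2 * (L * norm a)\<^sup>2" by (rule sq2)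
    finally show ?thesis by (simp add: power_mult_distrib)
  qed
  have ae: "AE \<omega> in M. norm ((norm (F (f \<omega>)))\<^sup>2) \<le> norm (2 * (norm (F 0))\<^sup>2 + 2 * (L\<^sup>2 * (norm (f \<omega>))\<^sup>2))"
    using pt by (intro AE_I2) auto
  show ?thesis by (rule Bochner_Integration.integrable_bound[OF i _ ae]) measurable
qed
theorem propositionB1:
  fixes M Ft Gt :: "'w measure"
    and F :: "'a::euclidean_space \<Rightarrow> 'a"
    and X :: "'w \<Rightarrow> 'a"
    and U Uh :: "'w \<Rightarrow> 'a \<Rightarrow> 'a"
    and L \<mu> lam \<sigma> \<gamma> :: real
    and xs :: 'a
  assumes "prob_space M"
    and "subalgebra M Ft" and "subalgebra M Gt" and "subalgebra Gt Ft"
    and "L-lipschitz_on UNIV F"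
    and "F xs = 0"
    and "lam \<ge> 0" and "\<mu> > 0"
    and "\<forall>x. F x \<bullet> (x - xs) \<ge> \<mu> * (norm (x - xs))\<^sup>2 - lam"
    and "X \<in> borel_measurable Ft"
    and "integrable M (\<lambda>\<omega>. (norm (X \<omega>))\<^sup>2)"
    and "stoch_oracle M Ft U \<sigma>"
    and "stoch_oracle M Gt Uh \<sigma>"
    and "(\<lambda>\<omega>. X \<omega> - \<gamma> *\<^sub>R (F (X \<omega>) + U \<omega> (X \<omega>))) \<in> borel_measurable Gt"
    and "0 < \<gamma>" and "\<gamma> \<le> 1 / (sqrt 3 * L)"
  shows "let Xh = (\<lambda>\<omega>. X \<omega> - \<gamma> *\<^sub>R (F (X \<omega>) + U \<omega> (X \<omega>)));
             Z = (\<lambda>\<omega>. F (Xh \<omega>) + Uh \<omega> (Xh \<omega>))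
         in AE \<omega> in M.
              \<gamma>\<^sup>2 * real_cond_exp M Ft (\<lambda>\<omega>. (norm (Z \<omega>))\<^sup>2) \<omega>
              \<le> 2 * \<gamma> * real_cond_exp M Ft (\<lambda>\<omega>. Z \<omega> \<bullet> (X \<omega> - xs)) \<omega>
                + 2 * (lam * \<gamma> + 3 * \<sigma>\<^sup>2 * \<gamma>\<^sup>2)"
proof -
  interpret P: prob_space M by fact
  have fm: "finite_measure M" by (rule P.finite_measure_axioms)
  have "finite_measure_subalgebra M Ft"
    unfolding finite_measure_subalgebra_def finite_measure_subalgebra_axioms_def
    using fm assms(2) by simp
  then interpret Ft: sigma_finite_subalgebra M Ft by (rule finite_measure_subalgebra_is_sigma_finite)
  have "finite_measure_subalgebra M Gt"
    unfolding finite_measure_subalgebra_def finite_measure_subalgebra_axioms_def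
    using fm assms(3) by simp
  then interpret Gt: sigma_finite_subalgebra M Gt by (rule finite_measure_subalgebra_is_sigma_finite)
  define Xh where "Xh = (\<lambda>\<omega>. X \<omega> - \<gamma> *\<^sub>R (F (X \<omega>) + U \<omega> (X \<omega>)))"
  define Z where "Z = (\<lambda>\<omega>. F (Xh \<omega>) + Uh \<omega> (Xh \<omega>))"
  have Fm[measurable]: "F \<in> borel_measurable borel"
    by (rule borel_measurable_continuous_onI[OF lipschitz_on_continuous_on[OF assms(5)]])
  have L0: "L \<ge> 0" using lipschitz_on_nonneg[OF assms(5)] .
  have Lpos: "L > 0"
  proof (rule ccontr)
    assume "\<not> L > 0" hence "L = 0" using L0 by simp
    thus False using assms(15,16) by simp
  qed
  have gl: "3 * L\<^sup>2 * \<gamma>\<^sup>2 \<le> 1"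
  proof -
    have "\<gamma> * (sqrt 3 * L) \<le> 1" using assms(16) Lpos by (simp add: field_simps)
    hence "(\<gamma> * (sqrt 3 * L))\<^sup>2 \<le> 1\<^sup>2" using assms(15) Lpos
      by (intro power_mono) auto
    thus ?thesis by (simp add: power_mult_distrib algebra_simps)
  qed
  have XFt: "X \<in> borel_measurable Ft" by (rule assms(10))
  have Xm[measurable]: "X \<in> borel_measurable M" by (rule measurable_from_subalg[OF assms(2) assms(10)])
  have XhGt: "Xh \<in> borel_measurable Gt" unfolding Xh_def by (rule assms(14))
  have Xhm[measurable]: "Xh \<in> borel_measurable M" by (rule measurable_from_subalg[OF assms(3) XhGt])
  from assms(12) XFt have
    U1m[measurable]: "(\<lambda>\<omega>. U \<omega> (X \<omega>)) \<in> borel_measurable M" and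
    U1i: "integrable M (\<lambda>\<omega>. (norm (U \<omega> (X \<omega>)))\<^sup>2)" and
    U1c: "AE \<omega> in M. real_cond_exp M Ft (\<lambda>\<omega>. (norm (U \<omega> (X \<omega>)))\<^sup>2) \<omega> \<le> \<sigma>\<^sup>2"
    unfolding stoch_oracle_def by blast+
  from assms(13) XhGt have
    U2m[measurable]: "(\<lambda>\<omega>. Uh \<omega> (Xh \<omega>)) \<in> borel_measurable M" and
    U2i: "integrable M (\<lambda>\<omega>. (norm (Uh \<omega> (Xh \<omega>)))\<^sup>2)" and
    U2z: "\<forall>b\<in>Basis. AE \<omega> in M. real_cond_exp M Gt (\<lambda>\<omega>. Uh \<omega> (Xh \<omega>) \<bullet> b) \<omega> = 0" and
    U2c: "AE \<omega> in M. real_cond_exp M Gt (\<lambda>\<omega>. (norm (Uh \<omega> (Xh \<omega>)))\<^sup>2) \<omega> \<le> \<sigma>\<^sup>2"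
    unfolding stoch_oracle_def by blast+
  have Zm[measurable]: "Z \<in> borel_measurable M" unfolding Z_def by measurable
  have Xi: "integrable M (\<lambda>\<omega>. (norm (X \<omega>))\<^sup>2)" by (rule assms(11))
  have ci: "integrable M (\<lambda>\<omega>. (norm (xs))\<^sup>2)" using fm by (rule finite_measure.integrable_const)
  have FXi: "integrable M (\<lambda>\<omega>. (norm (F (X \<omega>)))\<^sup>2)" by (rule L2_lip[OF Xm Xi fm assms(5)])
  have Gi: "integrable M (\<lambda>\<omega>. (norm (F (X \<omega>) + U \<omega> (X \<omega>)))\<^sup>2)"
    by (rule L2_add[OF _ _ FXi U1i]; measurable)
  have Xhi: "integrable M (\<lambda>\<omega>. (norm (Xh \<omega>))\<^sup>2)"
    unfolding Xh_def by (rule L2_diff[OF _ _ Xi L2_scale[OF Gi]]; measurable)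
  have FXhi: "integrable M (\<lambda>\<omega>. (norm (F (Xh \<omega>)))\<^sup>2)" by (rule L2_lip[OF Xhm Xhi fm assms(5)])
  have Zi: "integrable M (\<lambda>\<omega>. (norm (Z \<omega>))\<^sup>2)"
    unfolding Z_def by (rule L2_add[OF _ _ FXhi U2i]; measurable)
  have Xdi: "integrable M (\<lambda>\<omega>. (norm (X \<omega> - xs))\<^sup>2)"
    by (rule L2_diff[OF _ _ Xi ci]; measurable)
  have Xhdi: "integrable M (\<lambda>\<omega>. (norm (Xh \<omega> - xs))\<^sup>2)"
    by (rule L2_diff[OF _ _ Xhi ci]; measurable)
  have Bi: "integrable M (\<lambda>\<omega>. Z \<omega> \<bullet> (X \<omega> - xs))"
    by (rule L2_inner[OF _ _ Zi Xdi]; measurable)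
  have Di: "integrable M (\<lambda>\<omega>. Uh \<omega> (Xh \<omega>) \<bullet> (Xh \<omega> - xs))"
    by (rule L2_inner[OF _ _ U2i Xhdi]; measurable)

  define b1 where "b1 = (\<lambda>\<omega>. (2 * \<gamma>) * (Z \<omega> \<bullet> (X \<omega> - xs)))"
  define b2 where "b2 = (\<lambda>\<omega>::'w. 2 * \<gamma> * lam)"
  define b3 where "b3 = (\<lambda>\<omega>. (- 2 * \<gamma>) * (Uh \<omega> (Xh \<omega>) \<bullet> (Xh \<omega> - xs)))"
  define b4 where "b4 = (\<lambda>\<omega>. (3 * \<gamma>\<^sup>2) * (norm (Uh \<omega> (Xh \<omega>)))\<^sup>2)"
  define b5 where "b5 = (\<lambda>\<omega>. (3 * \<gamma>\<^sup>2) * (norm (U \<omega> (X \<omega>)))\<^sup>2)"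
  have b1i: "integrable M b1" unfolding b1_def using Bi by (rule integrable_mult_right)
  have b2i: "integrable M b2" unfolding b2_def using fm by (rule finite_measure.integrable_const)
  have b3i: "integrable M b3" unfolding b3_def using Di by (rule integrable_mult_right)
  have b4i: "integrable M b4" unfolding b4_def using U2i by (rule integrable_mult_right)
  have b5i: "integrable M b5" unfolding b5_def using U1i by (rule integrable_mult_right)
  have i12: "integrable M (\<lambda>\<omega>. b1 \<omega> + b2 \<omega>)" by (rule Bochner_Integration.integrable_add[OF b1i b2i])
  have i123: "integrable M (\<lambda>\<omega>. b1 \<omega> + b2 \<omega> + b3 \<omega>)" by (rule Bochner_Integration.integrable_add[OF i12 b3i])
  have i1234: "integrable M (\<lambda>\<omega>. b1 \<omega> + b2 \<omega> + b3 \<omega> + b4 \<omega>)" by (rule Bochner_Integration.integrable_add[OF i123 b4i])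
  have i12345: "integrable M (\<lambda>\<omega>. b1 \<omega> + b2 \<omega> + b3 \<omega> + b4 \<omega> + b5 \<omega>)" by (rule Bochner_Integration.integrable_add[OF i1234 b5i])
  have pw: "\<gamma>\<^sup>2 * (norm (Z \<omega>))\<^sup>2 \<le> b1 \<omega> + b2 \<omega> + b3 \<omega> + b4 \<omega> + b5 \<omega>" for \<omega>
  proof -
    have "\<gamma>\<^sup>2 * (norm (Z \<omega>))\<^sup>2 \<le> 2 * \<gamma> * (Z \<omega> \<bullet> (X \<omega> - xs)) + 2 * \<gamma> * lam
     - 2 * \<gamma> * (Uh \<omega> (Xh \<omega>) \<bullet> (Xh \<omega> - xs)) + 3 * \<gamma>\<^sup>2 * (norm (Uh \<omega> (Xh \<omega>)))\<^sup>2
     + 3 * \<gamma>\<^sup>2 * (norm (U \<omega> (X \<omega>)))\<^sup>2"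
    proof (rule pointwise_ineq[where g = "F (X \<omega>) + U \<omega> (X \<omega>)" and fx = "F (X \<omega>)"
          and fxh = "F (Xh \<omega>)" and L = L])
      show "Xh \<omega> = X \<omega> - \<gamma> *\<^sub>R (F (X \<omega>) + U \<omega> (X \<omega>))" by (simp add: Xh_def)
      show "Z \<omega> = F (Xh \<omega>) + Uh \<omega> (Xh \<omega>)" by (simp add: Z_def)
      show "norm (F (Xh \<omega>) - F (X \<omega>)) \<le> L * norm (Xh \<omega> - X \<omega>)"
        using lipschitz_onD[OF assms(5), of "Xh \<omega>" "X \<omega>"] by (simp add: dist_norm)
      have "\<mu> * (norm (Xh \<omega> - xs))\<^sup>2 \<ge> 0" using assms(8) by simp
      then show "- lam \<le> F (Xh \<omega>) \<bullet> (Xh \<omega> - xs)" using assms(9)[rule_format, of "Xh \<omega>"] by linarith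
    qed (use L0 gl assms(15) in auto)
    then show ?thesis unfolding b1_def b2_def b3_def b4_def b5_def by (simp add: algebra_simps)
  qed

  let ?E = "real_cond_exp M Ft"
  have m1: "AE \<omega> in M. ?E (\<lambda>\<omega>. \<gamma>\<^sup>2 * (norm (Z \<omega>))\<^sup>2) \<omega> \<le> ?E (\<lambda>\<omega>. b1 \<omega> + b2 \<omega> + b3 \<omega> + b4 \<omega> + b5 \<omega>) \<omega>"
    by (rule Ft.real_cond_exp_mono[OF AE_I2[OF pw] integrable_mult_right[OF Zi] i12345])
  have c0: "AE \<omega> in M. ?E (\<lambda>\<omega>. \<gamma>\<^sup>2 * (norm (Z \<omega>))\<^sup>2) \<omega> = \<gamma>\<^sup>2 * ?E (\<lambda>\<omega>. (norm (Z \<omega>))\<^sup>2) \<omega>"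
    by (rule Ft.real_cond_exp_cmult[OF Zi])
  have s4: "AE \<omega> in M. ?E (\<lambda>\<omega>. b1 \<omega> + b2 \<omega> + b3 \<omega> + b4 \<omega> + b5 \<omega>) \<omega>
       = ?E (\<lambda>\<omega>. b1 \<omega> + b2 \<omega> + b3 \<omega> + b4 \<omega>) \<omega> + ?E b5 \<omega>"
    by (rule Ft.real_cond_exp_add[OF i1234 b5i])
  have s3: "AE \<omega> in M. ?E (\<lambda>\<omega>. b1 \<omega> + b2 \<omega> + b3 \<omega> + b4 \<omega>) \<omega>
       = ?E (\<lambda>\<omega>. b1 \<omega> + b2 \<omega> + b3 \<omega>) \<omega> + ?E b4 \<omega>"
    by (rule Ft.real_cond_exp_add[OF i123 b4i])
  have s2: "AE \<omega> in M. ?E (\<lambda>\<omega>. b1 \<omega> + b2 \<omega> + b3 \<omega>) \<omega>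
       = ?E (\<lambda>\<omega>. b1 \<omega> + b2 \<omega>) \<omega> + ?E b3 \<omega>"
    by (rule Ft.real_cond_exp_add[OF i12 b3i])
  have s1: "AE \<omega> in M. ?E (\<lambda>\<omega>. b1 \<omega> + b2 \<omega>) \<omega> = ?E b1 \<omega> + ?E b2 \<omega>"
    by (rule Ft.real_cond_exp_add[OF b1i b2i])
  have e1: "AE \<omega> in M. ?E b1 \<omega> = 2 * \<gamma> * ?E (\<lambda>\<omega>. Z \<omega> \<bullet> (X \<omega> - xs)) \<omega>"
    unfolding b1_def by (rule Ft.real_cond_exp_cmult[OF Bi])
  have e2: "AE \<omega> in M. ?E b2 \<omega> = 2 * \<gamma> * lam"
    unfolding b2_def by (rule Ft.real_cond_exp_F_meas[OF finite_measure.integrable_const[OF fm]]) simp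
  have e4: "AE \<omega> in M. ?E b4 \<omega> = 3 * \<gamma>\<^sup>2 * ?E (\<lambda>\<omega>. (norm (Uh \<omega> (Xh \<omega>)))\<^sup>2) \<omega>"
    unfolding b4_def by (rule Ft.real_cond_exp_cmult[OF U2i])
  have e5: "AE \<omega> in M. ?E b5 \<omega> = 3 * \<gamma>\<^sup>2 * ?E (\<lambda>\<omega>. (norm (U \<omega> (X \<omega>)))\<^sup>2) \<omega>"
    unfolding b5_def by (rule Ft.real_cond_exp_cmult[OF U1i])
  have e3a: "AE \<omega> in M. ?E b3 \<omega> = (- 2 * \<gamma>) * ?E (\<lambda>\<omega>. Uh \<omega> (Xh \<omega>) \<bullet> (Xh \<omega> - xs)) \<omega>"
    unfolding b3_def by (rule Ft.real_cond_exp_cmult[OF Di])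
  have Dsum: "(\<lambda>\<omega>. Uh \<omega> (Xh \<omega>) \<bullet> (Xh \<omega> - xs))
      = (\<lambda>\<omega>. \<Sum>b\<in>Basis. ((Xh \<omega> - xs) \<bullet> b) * (Uh \<omega> (Xh \<omega>) \<bullet> b))"
    by (rule ext, subst euclidean_inner) (simp add: mult.commute)
  have Dterm_i: "integrable M (\<lambda>\<omega>. ((Xh \<omega> - xs) \<bullet> b) * (Uh \<omega> (Xh \<omega>) \<bullet> b))" for b
    by (rule L2_comp_inner[OF _ _ Xhdi U2i]; measurable)
  have Ui_b: "integrable M (\<lambda>\<omega>. Uh \<omega> (Xh \<omega>) \<bullet> b)" for b
  proof -
    have "integrable M (\<lambda>\<omega>. Uh \<omega> (Xh \<omega>) \<bullet> (\<lambda>_. b) \<omega>)"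
      by (rule L2_inner[OF _ _ U2i finite_measure.integrable_const[OF fm]]; measurable)
    thus ?thesis by simp
  qed
  have dG1: "AE \<omega> in M. real_cond_exp M Gt (\<lambda>\<omega>. Uh \<omega> (Xh \<omega>) \<bullet> (Xh \<omega> - xs)) \<omega>
      = (\<Sum>b\<in>Basis. real_cond_exp M Gt (\<lambda>\<omega>. ((Xh \<omega> - xs) \<bullet> b) * (Uh \<omega> (Xh \<omega>) \<bullet> b)) \<omega>)"
    unfolding Dsum by (rule Gt.real_cond_exp_sum) (rule Dterm_i)
  have dG2: "AE \<omega> in M. \<forall>b\<in>Basis. real_cond_exp M Gt (\<lambda>\<omega>. ((Xh \<omega> - xs) \<bullet> b) * (Uh \<omega> (Xh \<omega>) \<bullet> b)) \<omega> = 0"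
  proof (rule AE_finite_allI[OF finite_Basis])
    fix b :: 'a assume b: "b \<in> Basis"
    have [measurable]: "(\<lambda>\<omega>. (Xh \<omega> - xs) \<bullet> b) \<in> borel_measurable Gt"
      using XhGt by measurable
    have "AE \<omega> in M. real_cond_exp M Gt (\<lambda>\<omega>. ((Xh \<omega> - xs) \<bullet> b) * (Uh \<omega> (Xh \<omega>) \<bullet> b)) \<omega>
        = ((Xh \<omega> - xs) \<bullet> b) * real_cond_exp M Gt (\<lambda>\<omega>. Uh \<omega> (Xh \<omega>) \<bullet> b) \<omega>"
      by (rule Gt.real_cond_exp_mult[OF _ _ Dterm_i]; measurable)
    moreover have "AE \<omega> in M. real_cond_exp M Gt (\<lambda>\<omega>. Uh \<omega> (Xh \<omega>) \<bullet> b) \<omega> = 0"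
      using U2z b by blast
    ultimately show "AE \<omega> in M. real_cond_exp M Gt (\<lambda>\<omega>. ((Xh \<omega> - xs) \<bullet> b) * (Uh \<omega> (Xh \<omega>) \<bullet> b)) \<omega> = 0"
      by eventually_elim simp
  qed
  have dG: "AE \<omega> in M. real_cond_exp M Gt (\<lambda>\<omega>. Uh \<omega> (Xh \<omega>) \<bullet> (Xh \<omega> - xs)) \<omega> = (\<lambda>_. 0) \<omega>"
    using dG1 dG2 by eventually_elim simp
  have dF1: "AE \<omega> in M. ?E (real_cond_exp M Gt (\<lambda>\<omega>. Uh \<omega> (Xh \<omega>) \<bullet> (Xh \<omega> - xs))) \<omega>
      = ?E (\<lambda>\<omega>. Uh \<omega> (Xh \<omega>) \<bullet> (Xh \<omega> - xs)) \<omega>"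
    by (rule Ft.real_cond_exp_nested_subalg[OF assms(3) assms(4) Di])
  have dF2: "AE \<omega> in M. ?E (real_cond_exp M Gt (\<lambda>\<omega>. Uh \<omega> (Xh \<omega>) \<bullet> (Xh \<omega> - xs))) \<omega> = ?E (\<lambda>_. 0) \<omega>"
    by (rule Ft.real_cond_exp_cong[OF dG]; measurable)
  have dF3: "AE \<omega> in M. ?E (\<lambda>_. 0) \<omega> = 0"
    by (rule Ft.real_cond_exp_F_meas[OF integrable_zero]) simp
  have e3: "AE \<omega> in M. ?E b3 \<omega> = 0"
    using e3a dF1 dF2 dF3 by eventually_elim simp
  have vF1: "AE \<omega> in M. ?E (real_cond_exp M Gt (\<lambda>\<omega>. (norm (Uh \<omega> (Xh \<omega>)))\<^sup>2)) \<omega>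
      = ?E (\<lambda>\<omega>. (norm (Uh \<omega> (Xh \<omega>)))\<^sup>2) \<omega>"
    by (rule Ft.real_cond_exp_nested_subalg[OF assms(3) assms(4) U2i])
  have vF2: "AE \<omega> in M. ?E (real_cond_exp M Gt (\<lambda>\<omega>. (norm (Uh \<omega> (Xh \<omega>)))\<^sup>2)) \<omega> \<le> \<sigma>\<^sup>2"
    by (rule Ft.real_cond_exp_le_c[OF Gt.real_cond_exp_int(1)[OF U2i] U2c])
  have v: "AE \<omega> in M. ?E (\<lambda>\<omega>. (norm (Uh \<omega> (Xh \<omega>)))\<^sup>2) \<omega> \<le> \<sigma>\<^sup>2"
    using vF1 vF2 by eventually_elim simp
  have final: "AE \<omega> in M. \<gamma>\<^sup>2 * ?E (\<lambda>\<omega>. (norm (Z \<omega>))\<^sup>2) \<omega>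
      \<le> 2 * \<gamma> * ?E (\<lambda>\<omega>. Z \<omega> \<bullet> (X \<omega> - xs)) \<omega> + 2 * (lam * \<gamma> + 3 * \<sigma>\<^sup>2 * \<gamma>\<^sup>2)"
    using m1 c0 s1 s2 s3 s4 e1 e2 e3 e4 e5 v U1c
  proof eventually_elim
    case (elim \<omega>)
    have g2: "0 \<le> 3 * \<gamma>\<^sup>2" by simp
    have "3 * \<gamma>\<^sup>2 * ?E (\<lambda>\<omega>. (norm (Uh \<omega> (Xh \<omega>)))\<^sup>2) \<omega> \<le> 3 * \<gamma>\<^sup>2 * \<sigma>\<^sup>2"
      using elim(12) by (intro mult_left_mono g2)
    moreover have "3 * \<gamma>\<^sup>2 * ?E (\<lambda>\<omega>. (norm (U \<omega> (X \<omega>)))\<^sup>2) \<omega> \<le> 3 * \<gamma>\<^sup>2 * \<sigma>\<^sup>2"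
      using elim(13) by (intro mult_left_mono g2)
    ultimately have h: "\<gamma>\<^sup>2 * ?E (\<lambda>\<omega>. (norm (Z \<omega>))\<^sup>2) \<omega>
        \<le> 2 * \<gamma> * ?E (\<lambda>\<omega>. Z \<omega> \<bullet> (X \<omega> - xs)) \<omega> + 2 * \<gamma> * lam
           + 3 * \<gamma>\<^sup>2 * \<sigma>\<^sup>2 + 3 * \<gamma>\<^sup>2 * \<sigma>\<^sup>2"
      using elim(1-11) by linarith
    have eq: "2 * (lam * \<gamma> + 3 * \<sigma>\<^sup>2 * \<gamma>\<^sup>2) = 2 * \<gamma> * lam
           + 3 * \<gamma>\<^sup>2 * \<sigma>\<^sup>2 + 3 * \<gamma>\<^sup>2 * \<sigma>\<^sup>2"
      by (simp add: algebra_simps)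
    show ?case using h eq by linarith
  qed
  then show ?thesis unfolding Let_def Z_def Xh_def by simp
qed

end
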